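(* Let $M=\begin{pmatrix}a&b\\c&d\end{pmatrix}$ and $M'=\begin{pmatrix}a'&b'\\c'&d'\end{pmatrix}$ be in $\mathrm{Mat}(2,\mathbb{Z})$ with $\det(M)=\det(M')$, $\mathrm{trace}(M)=\mathrm{trace}(M')$ and $\mathrm{mgcd}(M)=\mathrm{mgcd}(M')=r\in\mathbb{N}$. Then $r$ divides $d-d'$.
   Context: $\mathrm{mgcd}(M)=\gcd(b,c,d-a)\ge0$. *)

theory Defs
  imports "HOL-Analysis.Analysis"
begin

text \<open>For M = (a b; c d) in Mat(2,Z), mgcd(M) = gcd(b, c, d - a) (nonnegative).
  Index 1 is the first row/column, index 2 the second.\<close>
definition mgcd :: "int ^ 2 ^ 2 \<Rightarrow> int" where
  "mgcd M = gcd (M $ 1 $ 2) (gcd (M $ 2 $ 1) (M $ 2 $ 2 - M $ 1 $ 1))"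

end

theory Submission
  imports Defs
begin

lemma core:
  fixes a b c d a' b' c' d' r :: int
  assumes "r dvd b" "r dvd c" "r dvd d - a" "r dvd b'" "r dvd c'" "r dvd d' - a'"
    and tr: "a + d = a' + d'" and de: "a*d - b*c = a'*d' - b'*c'"
  shows "r dvd d - d'"
proof -
  obtain p where p: "b = r*p" using assms(1) by (auto elim: dvdE)
  obtain q where q: "c = r*q" using assms(2) by (auto elim: dvdE)
  obtain x where x: "d - a = r*x" using assms(3) by (auto elim: dvdE)
  obtain p' where p': "b' = r*p'" using assms(4) by (auto elim: dvdE)
  obtain q' where q': "c' = r*q'" using assms(5) by (auto elim: dvdE)
  obtain x' where x': "d' - a' = r*x'" using assms(6) by (auto elim: dvdE)
  show ?thesis
  proof (cases "r = 0")
    case True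
    then show ?thesis using x x' tr by simp
  next
    case False
    have d: "d = a + r*x" and d': "d' = a' + r*x'" using x x' by linarith+
    have t: "2*(a - a') = r*(x' - x)" using tr d d' by (simp add: algebra_simps)
    have i1: "4*(a*d) = (a+d)^2 - (d-a)^2" by (simp add: power2_eq_square algebra_simps)
    have i2: "4*(a'*d') = (a'+d')^2 - (d'-a')^2" by (simp add: power2_eq_square algebra_simps)
    have "4*(a*d - a'*d') = 4*(a*d) - 4*(a'*d')" by (simp add: right_diff_distrib)
    also have "... = (d'-a')^2 - (d-a)^2" using i1 i2 tr by simp
    finally have "4*(a*d - a'*d') = (d'-a')^2 - (d-a)^2" .
    hence "4*(r*r*(p*q - p'*q')) = r*r*(x'^2 - x^2)"
      using de p q p' q' x x' by (simp add: power2_eq_square algebra_simps)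
    hence e: "4*(p*q - p'*q') = x'^2 - x^2" using False by simp
    have "even (x' - x)"
    proof (rule ccontr)
      assume "odd (x' - x)"
      hence "odd (x' + x)" by presburger
      moreover have "x'^2 - x^2 = (x'-x)*(x'+x)" by (simp add: power2_eq_square algebra_simps)
      ultimately have "odd (x'^2 - x^2)" using \<open>odd (x' - x)\<close> by simp
      thus False using e by presburger
    qed
    then obtain k where kk: "x' - x = 2 * k" by (rule evenE)
    have "a - a' = r*k" using t kk by simp
    hence "d - d' = r*(k + x - x')" using d d' by (simp add: algebra_simps)
    thus ?thesis by simp
  qed
qed

theorem lemma38:
  fixes M M' :: "int ^ 2 ^ 2" and r :: nat
  assumes "det M = det M'"
    and "trace M = trace M'"
    and "mgcd M = int r" and "mgcd M' = int r"
  shows "int r dvd (M $ 2 $ 2 - M' $ 2 $ 2)"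
proof (rule core[where a="M$1$1" and b="M$1$2" and c="M$2$1" and a'="M'$1$1" and b'="M'$1$2" and c'="M'$2$1"])
  show "M $ 1 $ 1 + M $ 2 $ 2 = M' $ 1 $ 1 + M' $ 2 $ 2"
    using assms(2) by (simp add: trace_def sum_2)
  show "M $ 1 $ 1 * M $ 2 $ 2 - M $ 1 $ 2 * M $ 2 $ 1 = M' $ 1 $ 1 * M' $ 2 $ 2 - M' $ 1 $ 2 * M' $ 2 $ 1"
    using assms(1) by (simp add: det_2)
next
  have m: "gcd (M$1$2) (gcd (M$2$1) (M$2$2 - M$1$1)) = int r" using assms(3) unfolding mgcd_def .
  have m': "gcd (M'$1$2) (gcd (M'$2$1) (M'$2$2 - M'$1$1)) = int r" using assms(4) unfolding mgcd_def .
  show "int r dvd M$1$2" unfolding m[symmetric] by (rule gcd_dvd1)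
  show "int r dvd M$2$1" unfolding m[symmetric] by (rule dvd_trans[OF gcd_dvd2 gcd_dvd1])
  show "int r dvd M$2$2 - M$1$1" unfolding m[symmetric] by (rule dvd_trans[OF gcd_dvd2 gcd_dvd2])
  show "int r dvd M'$1$2" unfolding m'[symmetric] by (rule gcd_dvd1)
  show "int r dvd M'$2$1" unfolding m'[symmetric] by (rule dvd_trans[OF gcd_dvd2 gcd_dvd1])
  show "int r dvd M'$2$2 - M'$1$1" unfolding m'[symmetric] by (rule dvd_trans[OF gcd_dvd2 gcd_dvd2])
qed

end
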